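(* For every $x \in \mathbb{R}$ and $k \in \mathbb{Z}$, we have \[ \mathfrak{a}(x) = \mathfrak{a}(x+1), \qquad \mathfrak{b}_k(x) = \mathfrak{b}_k(x+1). \] If additionally $\alpha_k = \alpha_{-k}$ for every $k \in \mathbb{Z}$, then we also have \[ \mathfrak{a}(x) = \mathfrak{a}(0), \qquad \|\mathfrak{b}(x)\|_{\ell^2(\mathbb{Z})} = \|\mathfrak{b}(0)\|_{\ell^2(\mathbb{Z})}. \]
   Context: Setting: $\mathcal X=H^{s,p}(\mathbb{R};\mathbb{R}^n)$, $p\in[2,\infty)$, $s>1/p$. PDE $\mathrm{d}u=Au\,\mathrm{d}t+f(u)\,\mathrm{d}t$ with $A$ generating a translation-commuting $C_0$-semigroup, $f$ smooth as a Nemytskii map on $\mathcal X$; stable traveling pulse $u^*(x-ct)$. $\mathcal T_xf=f(\cdot-x)$. The isochron map $\pi_{\mathrm{iso}}$ (upright $\pi$ in the paper, not the circle constant) is defined near $\{\mathcal T_xu^*\}$ by $\lim_{t\to\infty}\|u^v(t)-u^*(\cdot-ct-\pi_{\mathrm{iso}}(v))\|_{\mathcal X}=0$; it satisfies $\pi_{\mathrm{iso}}(\mathcal T_xu)=x+\pi_{\mathrm{iso}}(u)$, hence $\pi_{\mathrm{iso}}'(\mathcal T_xu)[v]=\pi_{\mathrm{iso}}'(u)[\mathcal T_{-x}v]$ and $\pi_{\mathrm{iso}}''(\mathcal T_xu)[v,w]=\pi_{\mathrm{iso}}''(u)[\mathcal T_{-x}v,\mathcal T_{-x}w]$, and $\pi_{\mathrm{iso}}'(u^*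 )[v]=\langle\psi,v\rangle$ where $\psi$ is the bounded functional with $\Pi^cf=-\langle\psi,f\rangle\partial_xu^*$ ($\Pi^c$ the spectral projection of $\mathcal L=A+c\partial_x+f'(u^* )$ onto $\mathrm{span}\{\partial_xu^*\}$). Noise basis $e_k(x)=\sqrt2\cos(2\pi kx)$ ($k>0$), $e_0=1$, $e_k(x)=\sqrt2\sin(2\pi kx)$ ($k<0$), coefficients $\alpha_k$, nonlinearity $g$. Define $\mathfrak a(x)=\tfrac12\sum_k\alpha_k^2\big(\pi_{\mathrm{iso}}'(\mathcal T_xu^* )[g'(\mathcal T_xu^* )g(\mathcal T_xu^* )e_k^2]+\pi_{\mathrm{iso}}''(\mathcal T_xu^* )[g(\mathcal T_xu^* )e_k,g(\mathcal T_xu^* )e_k]\big)$, $\mathfrak b_k(x)=\alpha_k\pi_{\mathrm{iso}}'(\mathcal T_xu^* )[g(\mathcal T_xu^* )e_k]$, and $\mathfrak b(x)=(\mathfrak b_k(x))_{k\in\mathbb{Z}}$. *)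

theory Defs
  imports "HOL-Analysis.Analysis"
begin

definition transl :: "real \<Rightarrow> (real \<Rightarrow> 'a) \<Rightarrow> (real \<Rightarrow> 'a)" where
  "transl x f = (\<lambda>y. f (y - x))"

definition ebasis :: "int \<Rightarrow> real \<Rightarrow> real" where
  "ebasis k y = (if k > 0 then sqrt 2 * cos (2 * pi * of_int k * y)
                 else if k = 0 then 1
                 else sqrt 2 * sin (2 * pi * of_int k * y))"

definition nem :: "('b \<Rightarrow> 'c) \<Rightarrow> (real \<Rightarrow> 'b) \<Rightarrow> (real \<Rightarrow> 'c)" where
  "nem G u = (\<lambda>y. G (u y))"

definition nem_deriv :: "('b \<Rightarrow> 'b \<Rightarrow> 'c) \<Rightarrow> (real \<Rightarrow> 'b) \<Rightarrow> (real \<Rightarrow> 'b) \<Rightarrow> (real \<Rightarrow> 'c)" where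
  "nem_deriv DG u w = (\<lambda>y. DG (u y) (w y))"

definition fmult :: "(real \<Rightarrow> real) \<Rightarrow> (real \<Rightarrow> 'a::real_vector) \<Rightarrow> (real \<Rightarrow> 'a)" where
  "fmult h v = (\<lambda>y. h y *\<^sub>R v y)"

text \<open>The coefficient b_k(x) = alpha_k pi'(T_x u*)[g(T_x u*) e_k].
  dpi u v stands for pi_iso'(u)[v], d2pi u v w for pi_iso''(u)[v,w].\<close>
definition frak_b ::
  "(int \<Rightarrow> real) \<Rightarrow> ((real \<Rightarrow> 'a) \<Rightarrow> (real \<Rightarrow> 'a::real_vector) \<Rightarrow> real)
   \<Rightarrow> ('a \<Rightarrow> 'a) \<Rightarrow> (real \<Rightarrow> 'a) \<Rightarrow> real \<Rightarrow> int \<Rightarrow> real" where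
  "frak_b \<alpha> dpi G ustar x k =
     \<alpha> k * dpi (transl x ustar) (fmult (ebasis k) (nem G (transl x ustar)))"

definition frak_a ::
  "(int \<Rightarrow> real) \<Rightarrow> ((real \<Rightarrow> 'a) \<Rightarrow> (real \<Rightarrow> 'a::real_vector) \<Rightarrow> real)
   \<Rightarrow> ((real \<Rightarrow> 'a) \<Rightarrow> (real \<Rightarrow> 'a) \<Rightarrow> (real \<Rightarrow> 'a) \<Rightarrow> real)
   \<Rightarrow> ('a \<Rightarrow> 'a) \<Rightarrow> ('a \<Rightarrow> 'a \<Rightarrow> 'a) \<Rightarrow> (real \<Rightarrow> 'a) \<Rightarrow> real \<Rightarrow> real" where
  "frak_a \<alpha> dpi d2pi G DG ustar x =
     1/2 * (\<Sum>\<^sub>\<infinity>k::int. (\<alpha> k)\<^sup>2 *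
        (dpi (transl x ustar)
             (nem_deriv DG (transl x ustar) (fmult (\<lambda>y. (ebasis k y)\<^sup>2) (nem G (transl x ustar))))
       + d2pi (transl x ustar) (fmult (ebasis k) (nem G (transl x ustar)))
                               (fmult (ebasis k) (nem G (transl x ustar)))))"

definition l2norm :: "(int \<Rightarrow> real) \<Rightarrow> real" where
  "l2norm b = sqrt (\<Sum>\<^sub>\<infinity>k::int. (b k)\<^sup>2)"

end

theory Submission
  imports Defs
begin

lemma infsum_pair:
  fixes f :: "int \<Rightarrow> real"
  assumes "f summable_on UNIV"
  shows "infsum f UNIV = infsum (\<lambda>k. f k + f (- k)) UNIV / 2"
proof -
  have b: "bij_betw uminus (UNIV::int set) UNIV"
    by (rule bij_uminus)
  have s: "(\<lambda>k. f (- k)) summable_on UNIV"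
    using summable_on_reindex_bij_betw[OF b, of f] assms by simp
  have e: "infsum (\<lambda>k. f (- k)) UNIV = infsum f UNIV"
    using infsum_reindex_bij_betw[OF b, of f] by simp
  show ?thesis using infsum_add[OF assms s] e by simp
qed

lemma infsum_pair_nonneg:
  fixes f :: "int \<Rightarrow> real"
  assumes "\<And>k. f k \<ge> 0"
  shows "infsum f UNIV = infsum (\<lambda>k. f k + f (- k)) UNIV / 2"
proof (cases "f summable_on UNIV")
  case True then show ?thesis by (rule infsum_pair)
next
  case False
  have "\<not> (\<lambda>k. f k + f (- k)) summable_on UNIV"
  proof
    assume "(\<lambda>k. f k + f (- k)) summable_on UNIV"
    then have "f summable_on UNIV"
    proof (rule summable_on_comparison_test)
      fix k :: int
      show "f k \<le> f k + f (- k)" using assms[of "- k"] by simp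
      show "0 \<le> f k" by (rule assms)
    qed
    with False show False by simp
  qed
  then show ?thesis using False by (simp add: infsum_not_exists)
qed

lemma ebasis_per: "ebasis k (t + 1) = ebasis k t"
proof -
  have e: "2 * pi * of_int k * (t+1) = 2 * pi * of_int k * t + (2 * pi) * of_int k" by (simp add: algebra_simps)
  have c: "cos (2 * pi * of_int k * (t + 1)) = cos (2 * pi * of_int k * t)"
    unfolding e cos_add cos_int_2pin sin_int_2pin by simp
  have s: "sin (2 * pi * of_int k * (t + 1)) = sin (2 * pi * of_int k * t)"
    unfolding e sin_add cos_int_2pin sin_int_2pin by simp
  show ?thesis unfolding ebasis_def using c s by simp
qed

lemma ebasis_shift:
  "ebasis k (y + x) = cos (2 * pi * of_int k * x) * ebasis k y + sin (2 * pi * of_int k * x) * ebasis (- k) y"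
proof -
  define a where "a = 2 * pi * of_int k * y"
  define b where "b = 2 * pi * of_int k * x"
  have e: "2 * pi * of_int k * (y + x) = a + b" unfolding a_def b_def by (simp add: algebra_simps)
  have m: "2 * pi * of_int (- k) * y = - a" unfolding a_def by simp
  consider "k > 0" | "k = 0" | "k < 0" by linarith
  then show ?thesis
  proof cases
    case 1
    have h1: "ebasis k (y + x) = sqrt 2 * cos (a + b)"
      using 1 unfolding ebasis_def e by simp
    have h2: "ebasis k y = sqrt 2 * cos a"
      using 1 unfolding ebasis_def a_def by simp
    have h3: "ebasis (-k) y = sqrt 2 * sin (- a)"
      using 1 unfolding ebasis_def m by simp
    show ?thesis unfolding b_def[symmetric] h1 h2 h3 cos_add sin_minus by (simp add: algebra_simps)
  next
    case 2 then show ?thesis unfolding ebasis_def by simp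
  next
    case 3
    have h1: "ebasis k (y + x) = sqrt 2 * sin (a + b)"
      using 3 unfolding ebasis_def e by simp
    have h2: "ebasis k y = sqrt 2 * sin a"
      using 3 unfolding ebasis_def a_def by simp
    have h3: "ebasis (-k) y = sqrt 2 * cos (- a)"
      using 3 unfolding ebasis_def m by simp
    show ?thesis unfolding b_def[symmetric] h1 h2 h3 sin_add cos_minus by (simp add: algebra_simps)
  qed
qed

lemma ebasis_sq: "(ebasis k t)\<^sup>2 + (ebasis (- k) t)\<^sup>2 = 2"
proof -
  have "(sqrt 2 * a)\<^sup>2 + (sqrt 2 * b)\<^sup>2 = 2" if "a\<^sup>2 + b\<^sup>2 = 1" for a b :: real
    using that by (simp add: power_mult_distrib algebra_simps)
  then show ?thesis unfolding ebasis_def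
    by (auto simp: sin_cos_squared_add add.commute)
qed

lemma quad_alg: "c*(c*a + s*b) + s*(c*b' + s*d) + (c*(c*d + (-s)*b') + (-s)*(c*b + (-s)*a))
   = (c\<^sup>2 + s\<^sup>2)*(a + d)" for a b b' c d s :: real
  by (simp add: power2_eq_square algebra_simps)

lemma distr_alg: "a*(p+q) + a*(r+t) = a*((p+r)+(q+t))" for a p q r t :: real
  by (simp add: algebra_simps)

theorem proposition4p4:
  fixes Xs :: "(real \<Rightarrow> real^'n) set"
    and ustar :: "real \<Rightarrow> real^'n"
    and G :: "real^'n \<Rightarrow> real^'n"
    and DG :: "real^'n \<Rightarrow> real^'n \<Rightarrow> real^'n"
    and dpi :: "(real \<Rightarrow> real^'n) \<Rightarrow> (real \<Rightarrow> real^'n) \<Rightarrow> real"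
    and d2pi :: "(real \<Rightarrow> real^'n) \<Rightarrow> (real \<Rightarrow> real^'n) \<Rightarrow> (real \<Rightarrow> real^'n) \<Rightarrow> real"
    and \<alpha> :: "int \<Rightarrow> real"
  assumes X_transl: "\<And>x v. v \<in> Xs \<Longrightarrow> transl x v \<in> Xs"
    and X_add: "\<And>v w. v \<in> Xs \<Longrightarrow> w \<in> Xs \<Longrightarrow> (\<lambda>y. v y + w y) \<in> Xs"
    and X_scale: "\<And>c v. v \<in> Xs \<Longrightarrow> (\<lambda>y. c *\<^sub>R v y) \<in> Xs"
    and X_mult_e: "\<And>k v. v \<in> Xs \<Longrightarrow> fmult (ebasis k) v \<in> Xs"
    and ustar_X: "ustar \<in> Xs"
    and g_X: "nem G ustar \<in> Xs"
    and G_deriv: "\<And>z. (G has_derivative DG z) (at z)"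
    and dgg_X: "\<And>w. w \<in> Xs \<Longrightarrow> nem_deriv DG ustar w \<in> Xs"
    and dpi_linear: "\<And>a b v w. v \<in> Xs \<Longrightarrow> w \<in> Xs \<Longrightarrow>
        dpi ustar (\<lambda>y. a *\<^sub>R v y + b *\<^sub>R w y) = a * dpi ustar v + b * dpi ustar w"
    and d2pi_linear1: "\<And>a b v w z. v \<in> Xs \<Longrightarrow> w \<in> Xs \<Longrightarrow> z \<in> Xs \<Longrightarrow>
        d2pi ustar (\<lambda>y. a *\<^sub>R v y + b *\<^sub>R w y) z = a * d2pi ustar v z + b * d2pi ustar w z"
    and d2pi_linear2: "\<And>a b v w z. v \<in> Xs \<Longrightarrow> w \<in> Xs \<Longrightarrow> z \<in> Xs \<Longrightarrow>
        d2pi ustar z (\<lambda>y. a *\<^sub>R v y + b *\<^sub>R w y) = a * d2pi ustar z v + b * d2pi ustar z w"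
    and dpi_equiv: "\<And>x v. v \<in> Xs \<Longrightarrow> dpi (transl x ustar) v = dpi ustar (transl (-x) v)"
    and d2pi_equiv: "\<And>x v w. v \<in> Xs \<Longrightarrow> w \<in> Xs \<Longrightarrow>
        d2pi (transl x ustar) v w = d2pi ustar (transl (-x) v) (transl (-x) w)"
  shows "(\<forall>x::real. frak_a \<alpha> dpi d2pi G DG ustar x = frak_a \<alpha> dpi d2pi G DG ustar (x + 1))
       \<and> (\<forall>(x::real) (k::int). frak_b \<alpha> dpi G ustar x k = frak_b \<alpha> dpi G ustar (x + 1) k)
       \<and> ((\<forall>k. \<alpha> k = \<alpha> (- k))
           \<and> (\<forall>x::real. (\<lambda>k::int. (\<alpha> k)\<^sup>2 *
                 (dpi (transl x ustar)
                    (nem_deriv DG (transl x ustar) (fmult (\<lambda>y. (ebasis k y)\<^sup>2) (nem G (transl x ustar))))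
                  + d2pi (transl x ustar) (fmult (ebasis k) (nem G (transl x ustar)))
                                          (fmult (ebasis k) (nem G (transl x ustar))))) summable_on UNIV)
          \<longrightarrow> (\<forall>x::real. frak_a \<alpha> dpi d2pi G DG ustar x = frak_a \<alpha> dpi d2pi G DG ustar 0
                  \<and> l2norm (frak_b \<alpha> dpi G ustar x) = l2norm (frak_b \<alpha> dpi G ustar 0)))"
proof -
  have nemT: "nem G (transl x ustar) = transl x (nem G ustar)" for x
    by (simp add: nem_def transl_def)
  have gT: "nem G (transl x ustar) \<in> Xs" for x
    using nemT X_transl g_X by simp
  define A where "A k = fmult (ebasis k) (nem G ustar)" for k
  define W where "W k x = fmult (\<lambda>y. ebasis k (y + x)) (nem G ustar)" for k x
  define V where "V k x = nem_deriv DG ustar (fmult (\<lambda>y. (ebasis k (y + x))\<^sup>2) (nem G ustar))" for k x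
  have A_X: "A k \<in> Xs" for k unfolding A_def using X_mult_e g_X by simp
  have W_eq: "transl (-x) (fmult (ebasis k) (nem G (transl x ustar))) = W k x" for k x
    by (simp add: W_def fmult_def nem_def transl_def)
  have V_eq: "transl (-x) (nem_deriv DG (transl x ustar) (fmult (\<lambda>y. (ebasis k y)\<^sup>2) (nem G (transl x ustar)))) = V k x" for k x
    by (simp add: V_def fmult_def nem_def nem_deriv_def transl_def)
  have mem1: "fmult (ebasis k) (nem G (transl x ustar)) \<in> Xs" for k x
    using X_mult_e gT by simp
  have W_X: "W k x \<in> Xs" for k x
  proof -
    have "transl (-x) (fmult (ebasis k) (nem G (transl x ustar))) \<in> Xs" by (rule X_transl[OF mem1])
    then show ?thesis by (simp only: W_eq)
  qed
  have fsq_X: "fmult (\<lambda>y. (ebasis k (y + x))\<^sup>2) (nem G ustar) \<in> Xs" for k x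
  proof -
    have "fmult (\<lambda>y. (ebasis k (y + x))\<^sup>2) (nem G ustar)
      = transl (-x) (fmult (ebasis k) (fmult (ebasis k) (nem G (transl x ustar))))"
      by (simp add: fmult_def nem_def transl_def power2_eq_square)
    moreover have "transl (-x) (fmult (ebasis k) (fmult (ebasis k) (nem G (transl x ustar)))) \<in> Xs"
      by (rule X_transl[OF X_mult_e[OF X_mult_e[OF gT]]])
    ultimately show ?thesis by (simp only:)
  qed
  have V_X: "V k x \<in> Xs" for k x unfolding V_def using dgg_X fsq_X by simp
  have mem2: "nem_deriv DG (transl x ustar) (fmult (\<lambda>y. (ebasis k y)\<^sup>2) (nem G (transl x ustar))) \<in> Xs" for k x
  proof -
    have "nem_deriv DG (transl x ustar) (fmult (\<lambda>y. (ebasis k y)\<^sup>2) (nem G (transl x ustar))) = transl x (V k x)"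
      by (simp add: V_def fmult_def nem_def nem_deriv_def transl_def)
    moreover have "transl x (V k x) \<in> Xs" by (rule X_transl[OF V_X])
    ultimately show ?thesis by (simp only:)
  qed
  have b_form: "frak_b \<alpha> dpi G ustar x k = \<alpha> k * dpi ustar (W k x)" for x k
    unfolding frak_b_def using dpi_equiv[OF mem1] W_eq by simp
  define S where "S x k = (\<alpha> k)\<^sup>2 *
                 (dpi (transl x ustar)
                    (nem_deriv DG (transl x ustar) (fmult (\<lambda>y. (ebasis k y)\<^sup>2) (nem G (transl x ustar))))
                  + d2pi (transl x ustar) (fmult (ebasis k) (nem G (transl x ustar)))
                                          (fmult (ebasis k) (nem G (transl x ustar))))" for x k
  have S_form: "S x k = (\<alpha> k)\<^sup>2 * (dpi ustar (V k x) + d2pi ustar (W k x) (W k x))" for x k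
    unfolding S_def using dpi_equiv[OF mem2] V_eq d2pi_equiv[OF mem1 mem1] W_eq by simp
  have a_S: "frak_a \<alpha> dpi d2pi G DG ustar x = 1/2 * infsum (S x) UNIV" for x
    unfolding frak_a_def S_def by simp
  have eper: "ebasis k (y + (x + 1)) = ebasis k (y + x)" for k y x
    using ebasis_per[of k "y + x"] by (simp add: add.assoc)
  have Wper: "W k (x + 1) = W k x" for k x unfolding W_def using eper by simp
  have Vper: "V k (x + 1) = V k x" for k x unfolding V_def using eper by simp
  have part1: "\<forall>x::real. frak_a \<alpha> dpi d2pi G DG ustar x = frak_a \<alpha> dpi d2pi G DG ustar (x + 1)"
  proof
    fix x :: real
    have "S (x + 1) = S x" by (rule ext) (simp add: S_form Wper Vper)
    then show "frak_a \<alpha> dpi d2pi G DG ustar x = frak_a \<alpha> dpi d2pi G DG ustar (x + 1)"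
      by (simp add: a_S)
  qed
  have part2: "\<forall>(x::real) (k::int). frak_b \<alpha> dpi G ustar x k = frak_b \<alpha> dpi G ustar (x + 1) k"
    by (simp add: b_form Wper)
  have part3: "\<forall>x::real. frak_a \<alpha> dpi d2pi G DG ustar x = frak_a \<alpha> dpi d2pi G DG ustar 0
                  \<and> l2norm (frak_b \<alpha> dpi G ustar x) = l2norm (frak_b \<alpha> dpi G ustar 0)"
    if asym: "\<forall>k. \<alpha> k = \<alpha> (- k)" and summ: "\<forall>x. S x summable_on UNIV"
  proof
    fix x :: real
    have W_lin: "W k x = (\<lambda>y. cos (2 * pi * of_int k * x) *\<^sub>R A k y + sin (2 * pi * of_int k * x) *\<^sub>R A (- k) y)" for k x
      by (rule ext) (simp add: W_def A_def fmult_def ebasis_shift scaleR_add_left)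
    have W_neg: "W (- k) x = (\<lambda>y. cos (2 * pi * of_int k * x) *\<^sub>R A (- k) y + (- sin (2 * pi * of_int k * x)) *\<^sub>R A k y)" for k x
      using W_lin[of "- k" x] by simp
    have bpair: "(frak_b \<alpha> dpi G ustar x k)\<^sup>2 + (frak_b \<alpha> dpi G ustar x (- k))\<^sup>2
        = (\<alpha> k)\<^sup>2 * ((dpi ustar (A k))\<^sup>2 + (dpi ustar (A (- k)))\<^sup>2)" for x k
    proof -
      define c where "c = cos (2 * pi * of_int k * x)"
      define s where "s = sin (2 * pi * of_int k * x)"
      have cs: "c\<^sup>2 + s\<^sup>2 = 1" unfolding c_def s_def by (simp add: add.commute)
      have 1: "dpi ustar (W k x) = c * dpi ustar (A k) + s * dpi ustar (A (- k))"
        unfolding W_lin c_def s_def by (rule dpi_linear[OF A_X A_X])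
      have 2: "dpi ustar (W (- k) x) = c * dpi ustar (A (- k)) + (- s) * dpi ustar (A k)"
        unfolding W_neg c_def s_def by (rule dpi_linear[OF A_X A_X])
      have alg: "(a * (c * P + s * Q))\<^sup>2 + (a * (c * Q + (- s) * P))\<^sup>2 = a\<^sup>2 * (c\<^sup>2 + s\<^sup>2) * (P\<^sup>2 + Q\<^sup>2)" for a P Q :: real
        by (simp add: power2_eq_square algebra_simps)
      have ak: "\<alpha> (- k) = \<alpha> k" using asym[rule_format, of k] by (rule sym)
      show ?thesis using alg[of "\<alpha> k"] cs by (simp add: b_form 1 2 ak)
    qed
    have lin: "DG z p + DG z q = DG z (p + q)" for z p q
      using has_derivative_linear[OF G_deriv[of z]] by (simp add: linear_add)
    have Spair: "S x k + S x (- k) = (\<alpha> k)\<^sup>2 * (dpi ustar (\<lambda>y. DG (ustar y) (2 *\<^sub>R G (ustar y)))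
        + d2pi ustar (A k) (A k) + d2pi ustar (A (- k)) (A (- k)))" for x k
    proof -
      define c where "c = cos (2 * pi * of_int k * x)"
      define s where "s = sin (2 * pi * of_int k * x)"
      have cs: "c\<^sup>2 + s\<^sup>2 = 1" unfolding c_def s_def by (simp add: add.commute)
      have Vsum: "dpi ustar (V k x) + dpi ustar (V (- k) x) = dpi ustar (\<lambda>y. DG (ustar y) (2 *\<^sub>R G (ustar y)))"
      proof -
        have L: "dpi ustar (\<lambda>y. 1 *\<^sub>R V k x y + 1 *\<^sub>R V (- k) x y) = 1 * dpi ustar (V k x) + 1 * dpi ustar (V (- k) x)"
          by (rule dpi_linear[OF V_X V_X])
        have Vy: "V j x y = DG (ustar y) ((ebasis j (y + x))\<^sup>2 *\<^sub>R G (ustar y))" for j y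
          unfolding V_def nem_deriv_def fmult_def nem_def by (rule refl)
        have E: "(\<lambda>y. 1 *\<^sub>R V k x y + 1 *\<^sub>R V (- k) x y) = (\<lambda>y. DG (ustar y) (2 *\<^sub>R G (ustar y)))"
        proof (rule ext)
          fix y
          have "1 *\<^sub>R V k x y + 1 *\<^sub>R V (- k) x y
              = DG (ustar y) ((ebasis k (y + x))\<^sup>2 *\<^sub>R G (ustar y) + (ebasis (- k) (y + x))\<^sup>2 *\<^sub>R G (ustar y))"
            unfolding scaleR_one Vy by (rule lin)
          also have "\<dots> = DG (ustar y) (((ebasis k (y + x))\<^sup>2 + (ebasis (- k) (y + x))\<^sup>2) *\<^sub>R G (ustar y))"
            by (simp only: scaleR_add_left)
          also have "\<dots> = DG (ustar y) (2 *\<^sub>R G (ustar y))"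
            by (simp only: ebasis_sq)
          finally show "1 *\<^sub>R V k x y + 1 *\<^sub>R V (- k) x y = DG (ustar y) (2 *\<^sub>R G (ustar y))" .
        qed
        show ?thesis using L unfolding E by simp
      qed
      have Q: "d2pi ustar (\<lambda>y. c' *\<^sub>R P y + s' *\<^sub>R R y) (\<lambda>y. c' *\<^sub>R P y + s' *\<^sub>R R y)
        = c' * (c' * d2pi ustar P P + s' * d2pi ustar P R) + s' * (c' * d2pi ustar R P + s' * d2pi ustar R R)"
        if "P \<in> Xs" "R \<in> Xs" for c' s' P R
      proof -
        have Z: "(\<lambda>y. c' *\<^sub>R P y + s' *\<^sub>R R y) \<in> Xs" using that X_add X_scale by blast
        show ?thesis using d2pi_linear1[OF that Z] d2pi_linear2[OF that(1) that(2) that(1)]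
          d2pi_linear2[OF that(1) that(2) that(2)] by simp
      qed
      have Wk: "d2pi ustar (W k x) (W k x) = c * (c * d2pi ustar (A k) (A k) + s * d2pi ustar (A k) (A (- k)))
           + s * (c * d2pi ustar (A (- k)) (A k) + s * d2pi ustar (A (- k)) (A (- k)))"
        unfolding W_lin c_def s_def by (rule Q[OF A_X A_X])
      have Wnk: "d2pi ustar (W (- k) x) (W (- k) x) = c * (c * d2pi ustar (A (- k)) (A (- k)) + (- s) * d2pi ustar (A (- k)) (A k))
           + (- s) * (c * d2pi ustar (A k) (A (- k)) + (- s) * d2pi ustar (A k) (A k))"
        unfolding W_neg c_def s_def by (rule Q[OF A_X A_X])
      have Dsum: "d2pi ustar (W k x) (W k x) + d2pi ustar (W (- k) x) (W (- k) x)
          = d2pi ustar (A k) (A k) + d2pi ustar (A (- k)) (A (- k))"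
        unfolding Wk Wnk quad_alg cs by simp
      have ak: "\<alpha> (- k) = \<alpha> k" using asym[rule_format, of k] by (rule sym)
      have "S x k + S x (- k) = (\<alpha> k)\<^sup>2 * ((dpi ustar (V k x) + dpi ustar (V (- k) x))
         + (d2pi ustar (W k x) (W k x) + d2pi ustar (W (- k) x) (W (- k) x)))"
        unfolding S_form ak by (rule distr_alg)
      then show ?thesis unfolding Vsum Dsum by (simp only: add.assoc)
    qed
    have e1: "infsum (S x) UNIV = infsum (\<lambda>k. S x k + S x (- k)) UNIV / 2"
      using infsum_pair[of "S x"] summ by blast
    have e0: "infsum (S 0) UNIV = infsum (\<lambda>k. S 0 k + S 0 (- k)) UNIV / 2"
      using infsum_pair[of "S 0"] summ by blast
    have "frak_a \<alpha> dpi d2pi G DG ustar x = 1/2 * (infsum (\<lambda>k. S x k + S x (- k)) UNIV / 2)"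
      by (simp only: a_S e1)
    also have "(\<lambda>k. S x k + S x (- k)) = (\<lambda>k. S 0 k + S 0 (- k))"
      using Spair by simp
    also have "1/2 * (infsum (\<lambda>k. S 0 k + S 0 (- k)) UNIV / 2) = frak_a \<alpha> dpi d2pi G DG ustar 0"
      by (simp only: a_S e0)
    finally have 1: "frak_a \<alpha> dpi d2pi G DG ustar x = frak_a \<alpha> dpi d2pi G DG ustar 0" .
    have "infsum (\<lambda>k. (frak_b \<alpha> dpi G ustar x k)\<^sup>2) UNIV
        = infsum (\<lambda>k. (frak_b \<alpha> dpi G ustar x k)\<^sup>2 + (frak_b \<alpha> dpi G ustar x (- k))\<^sup>2) UNIV / 2"
      by (rule infsum_pair_nonneg) simp
    also have "(\<lambda>k. (frak_b \<alpha> dpi G ustar x k)\<^sup>2 + (frak_b \<alpha> dpi G ustar x (- k))\<^sup>2)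
        = (\<lambda>k. (frak_b \<alpha> dpi G ustar 0 k)\<^sup>2 + (frak_b \<alpha> dpi G ustar 0 (- k))\<^sup>2)"
      using bpair by simp
    also have "infsum \<dots> UNIV / 2 = infsum (\<lambda>k. (frak_b \<alpha> dpi G ustar 0 k)\<^sup>2) UNIV"
      by (rule infsum_pair_nonneg[symmetric]) simp
    finally have 2: "l2norm (frak_b \<alpha> dpi G ustar x) = l2norm (frak_b \<alpha> dpi G ustar 0)"
      by (simp add: l2norm_def)
    show "frak_a \<alpha> dpi d2pi G DG ustar x = frak_a \<alpha> dpi d2pi G DG ustar 0
                  \<and> l2norm (frak_b \<alpha> dpi G ustar x) = l2norm (frak_b \<alpha> dpi G ustar 0)"
      using 1 2 by simp
  qed
  show ?thesis using part1 part2 part3 unfolding S_def by blast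
qed

end
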